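(* Let $\mathbb{K}$ be a field and $f=a_0(x)+a_1(x)y+\cdots+a_n(x)y^n\in\mathbb{K}[x,y]$ with $n\geq 2$, $a_0,\ldots,a_n\in\mathbb{K}[x]$, $a_0a_n\neq 0$. Assume that $f$ has no nonconstant factor in $\mathbb{K}[x]$, and let $\nu_0$ and $\nu_n$ be the number of irreducible factors of $a_0(x)$ and $a_n(x)$ in $\mathbb{K}[x]$, respectively, counted with their multiplicities. Then $f$ is a product of at most $\nu=\min\{\nu_0,\nu_n\}$ irreducible polynomials over $\mathbb{K}[x]$ in each of the following two cases: (i) $a_0$ is reducible over $\mathbb{K}$, $\deg a_n\geq\deg a_0-\deg q$ where $q\in\mathbb{K}[x]$ is an irreducible factor of $a_0$ of smallest degree, and $\deg a_0>\max\{\deg a_1,\dots,\deg a_n\}$; (ii) $a_n$ is reducible over $\mathbb{K}$, $\deg a_0\geq\deg a_n-\deg q$ where $q\in\mathbb{K}[x]$ is an irreducible factor of $a_n$ of smallest degree, and $\deg a_n>\max\{\deg a_0,\dots,\deg a_{n-1}\}$.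
   Context: $f$ is regarded as a polynomial in $y$ with coefficients in $\mathbb{K}[x]$; "a product of at most $k$ irreducible polynomials over $\mathbb{K}[x]$" means that in the factorization of $f$ into irreducible elements of $\mathbb{K}[x][y]$ the number of factors, counted with multiplicities, is at most $k$. *)

theory Defs
  imports "HOL-Computational_Algebra.Computational_Algebra"
begin

text \<open>Bivariate polynomials K[x,y] are modelled as polynomials in y with coefficients
in K[x], i.e. type 'a poly poly; coeff f i is a_i(x).\<close>

definition irr_factorization_of :: "'a::algebraic_semidom \<Rightarrow> 'a list \<Rightarrow> bool" where
  "irr_factorization_of p gs \<longleftrightarrow>
     (\<forall>g\<in>set gs. irreducible g) \<and> (\<exists>u. is_unit u \<and> p = u * prod_list gs)"

definition num_irr_factors :: "'a::algebraic_semidom \<Rightarrow> nat" where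
  "num_irr_factors p = (LEAST k. \<exists>gs. length gs = k \<and> irr_factorization_of p gs)"

definition product_of_at_most_irr :: "nat \<Rightarrow> 'a::algebraic_semidom \<Rightarrow> bool" where
  "product_of_at_most_irr k p \<longleftrightarrow>
     (\<exists>gs. length gs \<le> k \<and> (\<forall>g\<in>set gs. irreducible g) \<and> p = prod_list gs)"

definition reducible :: "'a::algebraic_semidom \<Rightarrow> bool" where
  "reducible p \<longleftrightarrow> p \<noteq> 0 \<and> \<not> is_unit p \<and> \<not> irreducible p"

end

theory Submission
  imports Defs
begin

context
begin

interpretation fpoly:
  normalization_euclidean_semiring_multiplicative where zero = "0 :: 'a :: field poly"
    and one = 1 and plus = plus and minus = minus
    and times = times
    and normalize = "\<lambda>p. smult (inverse (lead_coeff p)) p"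
    and unit_factor = "\<lambda>p. [:lead_coeff p:]"
    and euclidean_size = "\<lambda>p. if p = 0 then 0 else 2 ^ degree p"
    and divide = divide and modulo = modulo
  rewrites "dvd.dvd (times :: 'a poly \<Rightarrow> _) = Rings.dvd"
    and "comm_monoid_mult.prod_mset times 1 = prod_mset"
    and "comm_semiring_1.irreducible times 1 0 = irreducible"
    and "comm_semiring_1.prime_elem times 1 0 = prime_elem"
proof -
  show "dvd.dvd (times :: 'a poly \<Rightarrow> _) = Rings.dvd"
    by (simp add: dvd_dict)
  show "comm_monoid_mult.prod_mset times 1 = prod_mset"
    by (simp add: prod_mset_dict)
  show "comm_semiring_1.irreducible times 1 0 = irreducible"
    by (simp add: irreducible_dict)
  show "comm_semiring_1.prime_elem times 1 0 = prime_elem"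
    by (simp add: prime_elem_dict)
  show "class.normalization_euclidean_semiring_multiplicative divide plus minus (0 :: 'a poly) times 1
    modulo (\<lambda>p. if p = 0 then 0 else 2 ^ degree p)
    (\<lambda>p. [:lead_coeff p:]) (\<lambda>p. smult (inverse (lead_coeff p)) p)"
  proof (standard, fold dvd_dict)
    fix p :: "'a poly"
    show "[:lead_coeff p:] * smult (inverse (lead_coeff p)) p = p"
      by (cases "p = 0") simp_all
  next
    fix p :: "'a poly" assume "is_unit p"
    then show "[:lead_coeff p:] = p"
      by (elim is_unit_polyE) (auto simp: monom_0 one_poly_def field_simps)
  next
    fix p :: "'a poly" assume "p \<noteq> 0"
    then show "is_unit [:lead_coeff p:]"
      by (simp add: is_unit_pCons_iff)
  next
    fix a b :: "'a poly" assume "is_unit a"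
    thus "[:lead_coeff (a * b):] = a * [:lead_coeff b:]"
      by (auto elim!: is_unit_polyE)
  qed (auto simp: lead_coeff_mult Rings.div_mult_mod_eq intro!: degree_mod_less' degree_mult_right_le)
qed

definition Om :: "'a::field poly \<Rightarrow> nat" where
  "Om x = size (fpoly.prime_factorization x)"

lemma Om_mult: "x \<noteq> 0 \<Longrightarrow> y \<noteq> 0 \<Longrightarrow> Om (x * y) = Om x + Om y"
  by (simp add: Om_def fpoly.prime_factorization_mult)

lemma Om_unit: "is_unit x \<Longrightarrow> Om x = 0"
  by (simp add: Om_def fpoly.prime_factorization_unit)

lemma Om_pos: "x \<noteq> 0 \<Longrightarrow> \<not> is_unit x \<Longrightarrow> Om x \<ge> 1"
  unfolding Om_def using fpoly.prime_factorization_empty_iff[of x]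
  by (metis One_nat_def Suc_leI bot_nat_0.not_eq_extremum size_eq_0_iff_empty)

lemma Om_irred: "irreducible x \<Longrightarrow> Om x = 1"
proof -
  assume irr: "irreducible x"
  then have "prime_elem x" by (rule fpoly.irreducible_imp_prime_elem)
  then have "fpoly.prime (smult (inverse (lead_coeff x)) x)" by simp
  then have "fpoly.prime_factorization (smult (inverse (lead_coeff x)) x) = {#smult (inverse (lead_coeff x)) x#}"
    by (rule fpoly.prime_factorization_prime)
  then show ?thesis unfolding Om_def by (simp only: fpoly.prime_factorization_normalize) simp
qed

lemma Om_prod_list: "0 \<notin> set xs \<Longrightarrow> Om (prod_list xs) = sum_list (map Om xs)"
  by (induction xs) (auto simp: Om_mult Om_unit prod_list_zero_iff)

lemma irr_fact_len:
  fixes p :: "'a::field poly"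
  assumes "irr_factorization_of p gs" "p \<noteq> 0"
  shows "length gs = Om p"
proof -
  from assms obtain u where u: "is_unit u" "p = u * prod_list gs" and irr: "\<forall>g\<in>set gs. irreducible g"
    unfolding irr_factorization_of_def by blast
  have nz: "0 \<notin> set gs" using irr by auto
  have u0: "u \<noteq> 0" using u(1) by auto
  have pz: "prod_list gs \<noteq> 0" using u assms(2) by auto
  have "Om p = Om u + Om (prod_list gs)" unfolding u(2) by (rule Om_mult[OF u0 pz])
  also have "\<dots> = sum_list (map Om gs)" using Om_unit[OF u(1)] Om_prod_list[OF nz] by simp
  also have "map Om gs = map (\<lambda>_. 1) gs"
    by (rule map_cong[OF refl]) (use irr Om_irred in blast)
  also have "sum_list (map (\<lambda>_. 1::nat) gs) = length gs" by (simp add: sum_list_triv)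
  finally show ?thesis by simp
qed

lemma irr_fact_ex:
  fixes p :: "'a::field poly"
  assumes "p \<noteq> 0"
  shows "\<exists>gs. irr_factorization_of p gs \<and> length gs = Om p"
proof -
  obtain xs where xs: "mset xs = fpoly.prime_factorization p" using ex_mset by blast
  have pm: "prod_mset (mset xs) = prod_list xs" by (rule prod_mset_prod_list)
  have "prod_list xs = smult (inverse (lead_coeff p)) p"
    using fpoly.prod_mset_prime_factorization[OF assms] unfolding xs[symmetric] pm .
  then have e: "p = [:lead_coeff p:] * prod_list xs" using assms by simp
  have un: "is_unit [:lead_coeff p:]" using assms by (simp add: is_unit_pCons_iff)
  have ir: "\<forall>g\<in>set xs. irreducible g"
  proof
    fix g assume "g \<in> set xs"
    then have "g \<in># fpoly.prime_factorization p" unfolding xs[symmetric] by simp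
    then have "fpoly.prime g" by (rule fpoly.in_prime_factors_imp_prime)
    then have "prime_elem g" by (rule fpoly.prime_imp_prime_elem)
    then show "irreducible g" by (rule prime_elem_imp_irreducible)
  qed
  have "length xs = Om p" unfolding Om_def xs[symmetric] by simp
  then show ?thesis using e un ir unfolding irr_factorization_of_def by blast
qed

lemma num_irr_eq:
  assumes p0: "(p::'a::field poly) \<noteq> 0"
  shows "num_irr_factors p = Om p"
  unfolding num_irr_factors_def
proof (rule Least_equality)
  show "\<exists>gs. length gs = Om p \<and> irr_factorization_of p gs" using irr_fact_ex[OF p0] by blast
next
  fix k assume "\<exists>gs. length gs = k \<and> irr_factorization_of p gs"
  then obtain gs where "length gs = k" "irr_factorization_of p gs" by blast
  then show "Om p \<le> k" using irr_fact_len[OF _ p0] by simp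
qed

lemma irr_divisor_exists:
  fixes a :: "'a::field poly"
  assumes "a \<noteq> 0" "\<not> is_unit a"
  shows "\<exists>r. r dvd a \<and> irreducible r"
proof -
  obtain r where "r dvd a" "fpoly.prime r" using fpoly.prime_divisor_exists[OF assms] by blast
  then show ?thesis using fpoly.prime_imp_prime_elem prime_elem_imp_irreducible by blast
qed

end

lemma ex_irr_fact_pp:
  fixes f :: "'a::field poly poly"
  shows "f \<noteq> 0 \<Longrightarrow> \<exists>gs u. is_unit u \<and> f = u * prod_list gs \<and> (\<forall>g\<in>set gs. irreducible g)"
proof (induction "degree f + degree (lead_coeff f)" arbitrary: f rule: less_induct)
  case less
  show ?case
  proof (cases "is_unit f")
    case True
    then show ?thesis by (intro exI[of _ "[]"] exI[of _ f]) auto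
  next
    case nu: False
    show ?thesis
    proof (cases "irreducible f")
      case True
      then show ?thesis by (intro exI[of _ "[f]"] exI[of _ 1]) auto
    next
      case False
      then obtain a b where ab: "f = a * b" "\<not> is_unit a" "\<not> is_unit b"
        using nu less.prems unfolding irreducible_def by blast
      have a0: "a \<noteq> 0" "b \<noteq> 0" using ab less.prems by auto
      have mu_pos: "degree p + degree (lead_coeff p) > 0" if "p \<noteq> 0" "\<not> is_unit p" for p :: "'a poly poly"
      proof (rule ccontr)
        assume "\<not> ?thesis"
        then have d: "degree p = 0" "degree (lead_coeff p) = 0" by auto
        have p1: "p = [:coeff p 0:]" using d(1) by (simp add: degree_0_id)
        have c1: "coeff p 0 = [:coeff (coeff p 0) 0:]" using d by (simp add: degree_0_id)
        have "coeff p 0 \<noteq> 0" using that(1) p1 by (metis pCons_0_0)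
        then have "coeff (coeff p 0) 0 \<noteq> 0" using c1 by (metis pCons_0_0)
        then have "is_unit (coeff p 0)" using c1 by (metis is_unit_pCons_iff)
        then have "is_unit p" using p1 by (metis is_unit_const_poly_iff)
        then show False using that by simp
      qed
      have mu: "degree f + degree (lead_coeff f) = (degree a + degree (lead_coeff a)) + (degree b + degree (lead_coeff b))"
      proof -
        have l: "lead_coeff f = lead_coeff a * lead_coeff b" using ab by (simp add: lead_coeff_mult)
        have "degree (lead_coeff f) = degree (lead_coeff a) + degree (lead_coeff b)"
          unfolding l using a0 by (simp add: degree_mult_eq)
        moreover have "degree f = degree a + degree b" using ab a0 by (simp add: degree_mult_eq)
        ultimately show ?thesis by simp
      qed
      obtain gs1 u1 where 1: "is_unit u1" "a = u1 * prod_list gs1" "\<forall>g\<in>set gs1. irreducible g"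
        using less.hyps[of a] mu mu_pos[of b] a0 ab by fastforce
      obtain gs2 u2 where 2: "is_unit u2" "b = u2 * prod_list gs2" "\<forall>g\<in>set gs2. irreducible g"
        using less.hyps[of b] mu mu_pos[of a] a0 ab by fastforce
      have e: "f = (u1 * u2) * prod_list (gs1 @ gs2)"
        by (simp only: ab(1) 1(2) 2(2) prod_list.append mult_ac)
      have u: "is_unit (u1 * u2)" using 1(1) 2(1) by (simp add: is_unit_mult_iff)
      have i: "\<forall>g\<in>set (gs1 @ gs2). irreducible g" unfolding set_append using 1(3) 2(3) by blast
      show ?thesis using e u i by blast
    qed
  qed
qed


definition Mx :: "'a::zero poly poly \<Rightarrow> nat" where
  "Mx p = Max ((\<lambda>i. degree (coeff p i)) ` {..degree p})"

definition LF :: "'a::zero poly poly \<Rightarrow> 'a poly" where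
  "LF p = Poly (map (\<lambda>i. coeff (coeff p i) (Mx p)) [0..<Suc (degree p)])"

lemma deg_le_Mx: "degree (coeff p i) \<le> Mx p"
proof (cases "i \<le> degree p")
  case True then show ?thesis unfolding Mx_def by (intro Max_ge) auto
next
  case False then show ?thesis by (simp add: coeff_eq_0)
qed

lemma Mx_attained: "\<exists>i\<le>degree p. degree (coeff p i) = Mx p"
proof -
  have "Mx p \<in> (\<lambda>i. degree (coeff p i)) ` {..degree p}"
    unfolding Mx_def by (intro Max_in) auto
  then show ?thesis by auto
qed

lemma Mx_leI: "(\<And>i. degree (coeff p i) \<le> m) \<Longrightarrow> Mx p \<le> m"
  unfolding Mx_def by (intro Max.boundedI) auto

lemma coeff_LF: "coeff (LF p) i = coeff (coeff p i) (Mx p)"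
  unfolding LF_def
  by (cases "i \<le> degree p") (auto simp: nth_default_def coeff_eq_0 simp del: upt_Suc)

lemma LF_nz: "p \<noteq> 0 \<Longrightarrow> LF p \<noteq> 0"
proof -
  assume p: "p \<noteq> 0"
  obtain i where i: "degree (coeff p i) = Mx p" using Mx_attained by blast
  show ?thesis
  proof (cases "coeff p i = 0")
    case False
    then have "coeff (LF p) i \<noteq> 0" using i by (metis coeff_LF leading_coeff_0_iff)
    then show ?thesis by auto
  next
    case True
    then have "Mx p = 0" using i by simp
    then have "degree (lead_coeff p) = 0" using deg_le_Mx[of p "degree p"] by simp
    then have "coeff (LF p) (degree p) = lead_coeff (lead_coeff p)" using \<open>Mx p = 0\<close>
      by (simp add: coeff_LF)
    then show ?thesis using p by auto
  qed
qed

lemma coeff_mult_bound: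
  fixes p q :: "'a::comm_semiring_1 poly"
  assumes "degree p \<le> a" "degree q \<le> b"
  shows "coeff (p * q) (a + b) = coeff p a * coeff q b"
proof (cases "degree p = a \<and> degree q = b")
  case True then show ?thesis using coeff_mult_degree_sum[of p q] by simp
next
  case False
  then have "degree p < a \<or> degree q < b" using assms by auto
  moreover have "degree (p*q) \<le> degree p + degree q" by (rule degree_mult_le)
  ultimately have "degree (p * q) < a + b" using assms by linarith
  then have "coeff (p*q) (a+b) = 0" by (simp add: coeff_eq_0)
  moreover have "coeff p a * coeff q b = 0"
    using \<open>degree p < a \<or> degree q < b\<close> by (auto simp: coeff_eq_0)
  ultimately show ?thesis by simp
qed

lemma Mx_mult_le:
  fixes g h :: "'a::comm_semiring_1 poly poly"
  shows "degree (coeff (g * h) k) \<le> Mx g + Mx h"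
  unfolding coeff_mult
  by (rule degree_sum_le) (auto intro: order.trans[OF degree_mult_le] add_mono deg_le_Mx)

lemma coeff_coeff_mult:
  fixes g h :: "'a::comm_semiring_1 poly poly"
  shows "coeff (coeff (g * h) k) (Mx g + Mx h) = coeff (LF g * LF h) k"
proof -
  have "coeff (coeff (g * h) k) (Mx g + Mx h) = (\<Sum>i\<le>k. coeff (coeff g i * coeff h (k-i)) (Mx g + Mx h))"
    by (simp add: coeff_mult[of g h] coeff_sum)
  also have "\<dots> = (\<Sum>i\<le>k. coeff (coeff g i) (Mx g) * coeff (coeff h (k-i)) (Mx h))"
    by (rule sum.cong) (simp_all add: coeff_mult_bound deg_le_Mx)
  also have "\<dots> = coeff (LF g * LF h) k"
    by (simp add: coeff_mult[of "LF g" "LF h"] coeff_LF)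
  finally show ?thesis .
qed

lemma LF_mult:
  fixes g h :: "'a::idom poly poly"
  assumes "g \<noteq> 0" "h \<noteq> 0"
  shows "Mx (g * h) = Mx g + Mx h \<and> LF (g * h) = LF g * LF h"
proof -
  have F: "LF g * LF h \<noteq> 0" using LF_nz assms by auto
  then obtain k where k: "coeff (LF g * LF h) k \<noteq> 0" by (metis leading_coeff_0_iff)
  then have "coeff (coeff (g * h) k) (Mx g + Mx h) \<noteq> 0" by (simp add: coeff_coeff_mult)
  then have "Mx g + Mx h \<le> degree (coeff (g * h) k)" by (rule le_degree)
  also have "\<dots> \<le> Mx (g * h)" by (rule deg_le_Mx)
  finally have eq: "Mx (g * h) = Mx g + Mx h" using Mx_leI[OF Mx_mult_le] by (meson le_antisym)
  have "LF (g * h) = LF g * LF h"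
    by (rule poly_eqI) (simp add: coeff_LF eq coeff_coeff_mult)
  then show ?thesis using eq by simp
qed

lemma degree_LF_le: "degree (LF p) \<le> degree p"
  by (rule degree_le) (simp add: coeff_LF coeff_eq_0)

lemma deg_lt_of_coeff0:
  fixes c :: "'a::zero poly"
  assumes "c \<noteq> 0" "degree c \<le> m" "coeff c m = 0"
  shows "degree c < m"
  using assms by (metis le_neq_implies_less leading_coeff_0_iff)

lemma factor_i:
  fixes f g h :: "'a::idom poly poly"
  assumes fgh: "f = g * h" and gh: "g \<noteq> 0" "h \<noteq> 0" and dg: "degree g \<ge> 1"
    and P: "\<forall>i\<in>{1..degree f}. degree (coeff f i) < degree (coeff f 0)" and df: "degree f \<ge> 1"
  shows "degree (lead_coeff g) < degree (coeff g 0)"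
proof -
  define d0 where "d0 = degree (coeff f 0)"
  have d0pos: "d0 > 0" using P df unfolding d0_def by (metis atLeastAtMost_iff gr0I le_refl not_less0)
  have "Mx f \<le> d0"
  proof (rule Mx_leI)
    fix i show "degree (coeff f i) \<le> d0"
    proof (cases "i = 0 \<or> i > degree f")
      case True then show ?thesis unfolding d0_def by (auto simp: coeff_eq_0)
    next
      case False then have "degree (coeff f i) < d0" using P unfolding d0_def by auto
      then show ?thesis by simp
    qed
  qed
  then have Mf: "Mx f = d0" using deg_le_Mx[of f 0] unfolding d0_def by simp
  have "degree (LF f) = 0"
  proof (rule degree_le[where n=0, simplified], intro allI impI)
    fix i :: nat assume "0 < i"
    show "coeff (LF f) i = 0"
    proof (cases "i \<le> degree f")
      case True
      then have "degree (coeff f i) < d0" using P \<open>0 < i\<close> unfolding d0_def by auto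
      then show ?thesis unfolding coeff_LF Mf by (simp add: coeff_eq_0)
    next
      case False
      then show ?thesis unfolding coeff_LF Mf by (simp add: coeff_eq_0)
    qed
  qed
  moreover have "LF f = LF g * LF h" using LF_mult[OF gh] fgh by simp
  ultimately have LFg0: "degree (LF g) = 0" using LF_nz[OF gh(1)] LF_nz[OF gh(2)] by (simp add: degree_mult_eq)
  then have "coeff (LF g) (degree g) = 0" using dg by (simp add: coeff_eq_0)
  then have "coeff (lead_coeff g) (Mx g) = 0" by (simp add: coeff_LF)
  then have 1: "degree (lead_coeff g) < Mx g" using gh deg_le_Mx
    by (intro deg_lt_of_coeff0) auto
  have "coeff (LF g) 0 \<noteq> 0" using LFg0 LF_nz[OF gh(1)] by (metis degree_0_id pCons_0_0)
  then have "coeff (coeff g 0) (Mx g) \<noteq> 0" by (simp add: coeff_LF)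
  then have "Mx g \<le> degree (coeff g 0)" by (rule le_degree)
  with 1 show ?thesis by simp
qed

lemma factor_ii:
  fixes f g h :: "'a::idom poly poly"
  assumes fgh: "f = g * h" and gh: "g \<noteq> 0" "h \<noteq> 0" and dg: "degree g \<ge> 1"
    and P: "\<forall>i<degree f. degree (coeff f i) < degree (lead_coeff f)" and g0: "coeff g 0 \<noteq> 0"
  shows "degree (coeff g 0) < degree (lead_coeff g)"
proof -
  define dn where "dn = degree (lead_coeff f)"
  have fnz: "f \<noteq> 0" using fgh gh by simp
  have "Mx f \<le> dn"
  proof (rule Mx_leI)
    fix i show "degree (coeff f i) \<le> dn"
      using P unfolding dn_def
      by (cases "i < degree f"; cases "i = degree f") (auto simp: coeff_eq_0)
  qed
  then have Mf: "Mx f = dn" using deg_le_Mx[of f "degree f"] unfolding dn_def by simp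
  have "LF f = monom (lead_coeff (lead_coeff f)) (degree f)"
  proof (rule poly_eqI)
    fix i show "coeff (LF f) i = coeff (monom (lead_coeff (lead_coeff f)) (degree f)) i"
      using P unfolding coeff_LF Mf dn_def coeff_monom
      by (cases "i < degree f"; cases "i = degree f") (auto simp: coeff_eq_0)
  qed
  then have "order 0 (LF f) = degree f" using fnz by simp
  moreover have LFm: "LF f = LF g * LF h" using LF_mult[OF gh] fgh by simp
  moreover have nz: "LF g * LF h \<noteq> 0" using LF_nz[OF gh(1)] LF_nz[OF gh(2)] by simp
  ultimately have "order 0 (LF g) + order 0 (LF h) = degree f" by (simp add: order_mult)
  moreover have "degree f = degree g + degree h" using fgh gh by (simp add: degree_mult_eq)
  moreover have "order 0 (LF h) \<le> degree h"
    using order_degree[of "LF h" 0] degree_LF_le[of h] LF_nz[OF gh(2)] by simp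
  moreover have og: "order 0 (LF g) \<le> degree (LF g)" using order_degree[of "LF g" 0] LF_nz[OF gh(1)] by simp
  ultimately have o1: "order 0 (LF g) \<ge> degree g" and o2: "degree (LF g) = degree g"
    using degree_LF_le[of g] by linarith+
  have "poly (LF g) 0 = 0" using o1 dg order_root[of "LF g" 0] by simp
  then have "coeff (coeff g 0) (Mx g) = 0" by (simp add: poly_0_coeff_0 coeff_LF)
  then have 1: "degree (coeff g 0) < Mx g" using g0 deg_le_Mx
    by (intro deg_lt_of_coeff0) auto
  have "coeff (LF g) (degree g) \<noteq> 0" using o2 LF_nz[OF gh(1)] by (metis leading_coeff_0_iff)
  then have "coeff (lead_coeff g) (Mx g) \<noteq> 0" by (simp add: coeff_LF)
  then have "Mx g \<le> degree (lead_coeff g)" by (rule le_degree)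
  with 1 show ?thesis by simp
qed


lemma degree_prod_list_eq':
  fixes xs :: "'a::idom poly list"
  shows "0 \<notin> set xs \<Longrightarrow> degree (prod_list xs) = sum_list (map degree xs)"
  by (induction xs) (auto simp: degree_mult_eq prod_list_zero_iff)

lemma sum_list_Suc': "(\<Sum>x\<leftarrow>xs. Suc (f x)) = (\<Sum>x\<leftarrow>xs. f x) + length xs"
  by (induction xs) auto

lemma sum_list_ge_len:
  fixes f :: "'b \<Rightarrow> nat"
  assumes "\<And>x. x \<in> set xs \<Longrightarrow> f x \<ge> 1"
  shows "length xs \<le> sum_list (map f xs)"
proof -
  have "sum_list (map (\<lambda>_. 1::nat) xs) \<le> sum_list (map f xs)"
    by (rule sum_list_mono) (use assms in auto)
  then show ?thesis by (simp add: sum_list_triv)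
qed

lemma reducible_deg:
  fixes A q :: "'a::field poly"
  assumes "reducible A" "q dvd A" "irreducible q"
  shows "degree A \<ge> degree q + 1"
proof -
  obtain r where r: "A = q * r" using assms(2) by (elim dvdE)
  have A0: "A \<noteq> 0" using assms(1) unfolding reducible_def by simp
  then have "r \<noteq> 0" "q \<noteq> 0" using r by auto
  have "\<not> is_unit r"
  proof
    assume "is_unit r"
    then have "irreducible A" using r assms(3) irreducible_mult_unit_left[of r q] by (simp add: mult.commute)
    then show False using assms(1) unfolding reducible_def by simp
  qed
  then have "degree r \<ge> 1" using \<open>r \<noteq> 0\<close> is_unit_iff_degree[of r] by simp
  then show ?thesis using r \<open>r \<noteq> 0\<close> \<open>q \<noteq> 0\<close> by (simp add: degree_mult_eq)
qed

lemma count_lemma: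
  fixes gs :: "'b list" and \<beta> \<epsilon> :: "'b \<Rightarrow> 'a::field poly"
  assumes L: "gs \<noteq> []"
    and deg: "\<forall>g\<in>set gs. \<beta> g \<noteq> 0 \<and> \<epsilon> g \<noteq> 0 \<and> degree (\<epsilon> g) < degree (\<beta> g)"
    and A: "A = cA * prod_list (map \<beta> gs)" "is_unit cA"
    and Z: "Z = cZ * prod_list (map \<epsilon> gs)" "is_unit cZ"
    and red: "reducible A"
    and q: "irreducible q" "q dvd A" "\<forall>r. irreducible r \<and> r dvd A \<longrightarrow> degree q \<le> degree r"
    and dZ: "int (degree Z) \<ge> int (degree A) - int (degree q)"
  shows "length gs \<le> Om A \<and> length gs \<le> Om Z"
proof -
  have cA0: "cA \<noteq> 0" and cZ0: "cZ \<noteq> 0" using A(2) Z(2) by auto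
  have nzb: "0 \<notin> set (map \<beta> gs)" and nze: "0 \<notin> set (map \<epsilon> gs)" using deg by auto
  have OmA: "Om A = sum_list (map (Om \<circ> \<beta>) gs)"
    using A cA0 nzb by (simp add: Om_mult Om_unit Om_prod_list prod_list_zero_iff)
  have OmZ: "Om Z = sum_list (map (Om \<circ> \<epsilon>) gs)"
    using Z cZ0 nze by (simp add: Om_mult Om_unit Om_prod_list prod_list_zero_iff)
  have dA: "degree A = sum_list (map (degree \<circ> \<beta>) gs)"
    using A cA0 nzb by (simp add: degree_mult_eq degree_prod_list_eq' prod_list_zero_iff
        is_unit_iff_degree)
  have dZ': "degree Z = sum_list (map (degree \<circ> \<epsilon>) gs)"
    using Z cZ0 nze by (simp add: degree_mult_eq degree_prod_list_eq' prod_list_zero_iff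
        is_unit_iff_degree)
  have "length gs \<le> Om A" unfolding OmA
  proof (rule sum_list_ge_len)
    fix g assume "g \<in> set gs"
    then have "\<beta> g \<noteq> 0" "degree (\<beta> g) > 0" using deg by fastforce+
    then show "1 \<le> (Om \<circ> \<beta>) g" using Om_pos[of "\<beta> g"] is_unit_iff_degree[of "\<beta> g"] by simp
  qed
  moreover have "length gs \<le> Om Z"
  proof (cases "\<forall>g\<in>set gs. degree (\<epsilon> g) > 0")
    case True
    show ?thesis unfolding OmZ
    proof (rule sum_list_ge_len)
      fix g assume "g \<in> set gs"
      then have "\<epsilon> g \<noteq> 0" "degree (\<epsilon> g) > 0" using deg True by fastforce+
      then show "1 \<le> (Om \<circ> \<epsilon>) g" using Om_pos[of "\<epsilon> g"] is_unit_iff_degree[of "\<epsilon> g"] by simp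
    qed
  next
    case False
    then obtain g0 where g0: "g0 \<in> set gs" "degree (\<epsilon> g0) = 0" by auto
    have b0: "\<beta> g0 \<noteq> 0" "degree (\<beta> g0) > 0" using deg g0 by fastforce+
    then have "\<not> is_unit (\<beta> g0)" using is_unit_iff_degree[of "\<beta> g0"] by simp
    then obtain r where r: "r dvd \<beta> g0" "irreducible r" using irr_divisor_exists b0 by blast
    have "\<beta> g0 dvd A" using A g0 by (simp add: prod_list_dvd)
    then have "r dvd A" using r(1) by (metis dvd_trans)
    then have "degree q \<le> degree r" using q r by blast
    also have "\<dots> \<le> degree (\<beta> g0)" using r b0 by (simp add: dvd_imp_degree_le)
    finally have qb: "degree q \<le> degree (\<beta> g0)" .
    define rest where "rest = remove1 g0 gs"
    have sb: "sum_list (map (degree \<circ> \<beta>) gs) = degree (\<beta> g0) + sum_list (map (degree \<circ> \<beta>) rest)"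
      unfolding rest_def using g0 by (simp add: sum_list_map_remove1)
    have se: "sum_list (map (degree \<circ> \<epsilon>) gs) = sum_list (map (degree \<circ> \<epsilon>) rest)"
      unfolding rest_def using g0 by (simp add: sum_list_map_remove1)
    have "sum_list (map (\<lambda>g. degree (\<epsilon> g) + 1) rest) \<le> sum_list (map (degree \<circ> \<beta>) rest)"
      proof (rule sum_list_mono)
      fix g assume "g \<in> set rest"
      then have "g \<in> set gs" unfolding rest_def by (meson set_remove1_subset subsetD)
      then show "degree (\<epsilon> g) + 1 \<le> (degree \<circ> \<beta>) g" using deg by fastforce
    qed
    then have "sum_list (map (degree \<circ> \<epsilon>) rest) + length rest \<le> sum_list (map (degree \<circ> \<beta>) rest)"
      by (simp add: sum_list_Suc' o_def)
    moreover have "length rest = length gs - 1" unfolding rest_def using g0 by (simp add: length_remove1)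
    ultimately have "degree Z + (length gs - 1) + degree q \<le> degree A"
      using dA dZ' sb se qb by simp
    then have "length gs \<le> 1" using dZ by linarith
    moreover have "degree A \<ge> degree q + 1" using reducible_deg red q by blast
    then have "degree Z \<ge> 1" using dZ by linarith
    then have "Om Z \<ge> 1" using Om_pos[of Z] is_unit_iff_degree[of Z] by (cases "Z = 0") auto
    ultimately show ?thesis by simp
  qed
  ultimately show ?thesis by simp
qed


lemma lead_coeff_prod_list':
  fixes xs :: "'a::idom poly list"
  shows "lead_coeff (prod_list xs) = prod_list (map lead_coeff xs)"
  by (induction xs) (auto simp: lead_coeff_mult)

theorem theorem2:
  fixes f :: "'a::field poly poly" and n :: nat
  assumes n_def: "n = degree f"
    and n2: "n \<ge> 2"
    and a0n: "coeff f 0 * coeff f n \<noteq> 0"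
    and nocontent: "\<forall>c :: 'a poly. [:c:] dvd f \<longrightarrow> degree c = 0"
    and cases:
      "(reducible (coeff f 0) \<and>
        (\<exists>q. irreducible q \<and> q dvd coeff f 0 \<and>
             (\<forall>r. irreducible r \<and> r dvd coeff f 0 \<longrightarrow> degree q \<le> degree r) \<and>
             int (degree (coeff f n)) \<ge> int (degree (coeff f 0)) - int (degree q)) \<and>
        (\<forall>i\<in>{1..n}. degree (coeff f i) < degree (coeff f 0)))
     \<or>
       (reducible (coeff f n) \<and>
        (\<exists>q. irreducible q \<and> q dvd coeff f n \<and>
             (\<forall>r. irreducible r \<and> r dvd coeff f n \<longrightarrow> degree q \<le> degree r) \<and>
             int (degree (coeff f 0)) \<ge> int (degree (coeff f n)) - int (degree q)) \<and>
        (\<forall>i<n. degree (coeff f i) < degree (coeff f n)))"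
  shows "product_of_at_most_irr (min (num_irr_factors (coeff f 0)) (num_irr_factors (coeff f n))) f"
proof -
  have a0: "coeff f 0 \<noteq> 0" and an: "coeff f n \<noteq> 0" using a0n by auto
  have f0: "f \<noteq> 0" using a0 by auto
  have lcf: "coeff f n = lead_coeff f" using n_def by simp
  obtain gs u where u: "is_unit u" "f = u * prod_list gs" and irr: "\<forall>g\<in>set gs. irreducible g"
    using ex_irr_fact_pp[OF f0] by blast
  obtain c where c: "u = [:c:]" "is_unit c" using u(1) is_unit_poly_iff by blast
  have gsne: "gs \<noteq> []"
  proof
    assume "gs = []"
    then have "degree f = 0" using u c by simp
    then show False using n2 n_def by simp
  qed
  have gprops: "g \<noteq> 0 \<and> degree g \<ge> 1 \<and> (\<exists>h. h \<noteq> 0 \<and> f = g * h)" if g: "g \<in> set gs" for g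
  proof -
    have "g dvd f" using u g by (simp add: prod_list_dvd)
    then obtain h where h: "f = g * h" by (elim dvdE)
    have gi: "irreducible g" using irr g by blast
    then have "g \<noteq> 0" by auto
    moreover have "h \<noteq> 0" using h f0 by auto
    moreover have "degree g \<ge> 1"
    proof (rule ccontr)
      assume "\<not> degree g \<ge> 1"
      then have dg: "degree g = 0" by simp
      then have gc: "g = [:coeff g 0:]" by (simp add: degree_0_id)
      then have "[:coeff g 0:] dvd f" using \<open>g dvd f\<close> by simp
      then have "degree (coeff g 0) = 0" using nocontent by blast
      then have "coeff g 0 = [:coeff (coeff g 0) 0:]" by (simp add: degree_0_id)
      moreover have "coeff g 0 \<noteq> 0" using gc \<open>g \<noteq> 0\<close> by (metis pCons_0_0)
      ultimately have "is_unit (coeff g 0)" by (metis is_unit_const_poly_iff is_unit_iff_degree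
            \<open>degree (coeff g 0) = 0\<close>)
      then have "is_unit g" using gc by (metis is_unit_const_poly_iff)
      then show False using gi unfolding irreducible_def by blast
    qed
    ultimately show ?thesis using h by blast
  qed
  have A: "coeff f 0 = c * prod_list (map (\<lambda>g. coeff g 0) gs)"
    using u c by (simp add: coeff_mult_0 coeff_0_prod_list)
  have Z: "coeff f n = c * prod_list (map lead_coeff gs)"
  proof -
    have "lead_coeff f = lead_coeff u * lead_coeff (prod_list gs)" using u(2) by (simp only: lead_coeff_mult)
    also have "\<dots> = c * prod_list (map lead_coeff gs)" using c(1) by (simp only: lead_coeff_prod_list') simp
    finally show ?thesis using lcf by simp
  qed
  have g0nz: "coeff g 0 \<noteq> 0" if "g \<in> set gs" for g
    using gprops[OF that] a0 by (auto simp: coeff_mult_0)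
  have bound: "length gs \<le> Om (coeff f 0) \<and> length gs \<le> Om (coeff f n)"
    using cases
  proof
    assume H: "reducible (coeff f 0) \<and>
        (\<exists>q. irreducible q \<and> q dvd coeff f 0 \<and>
             (\<forall>r. irreducible r \<and> r dvd coeff f 0 \<longrightarrow> degree q \<le> degree r) \<and>
             int (degree (coeff f n)) \<ge> int (degree (coeff f 0)) - int (degree q)) \<and>
        (\<forall>i\<in>{1..n}. degree (coeff f i) < degree (coeff f 0))"
    then obtain q where q: "irreducible q" "q dvd coeff f 0"
      "\<forall>r. irreducible r \<and> r dvd coeff f 0 \<longrightarrow> degree q \<le> degree r"
      "int (degree (coeff f n)) \<ge> int (degree (coeff f 0)) - int (degree q)" by blast
    have deg: "\<forall>g\<in>set gs. coeff g 0 \<noteq> 0 \<and> lead_coeff g \<noteq> 0 \<and> degree (lead_coeff g) < degree (coeff g 0)"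
    proof
      fix g assume g: "g \<in> set gs"
      obtain h where h: "h \<noteq> 0" "f = g * h" and "g \<noteq> 0" "degree g \<ge> 1" using gprops[OF g] by blast
      have "degree (lead_coeff g) < degree (coeff g 0)"
      proof (rule factor_i[OF h(2) \<open>g \<noteq> 0\<close> h(1) \<open>degree g \<ge> 1\<close>])
        have "\<forall>i\<in>{1..n}. degree (coeff f i) < degree (coeff f 0)" by (rule conjunct2[OF conjunct2[OF H]])
        then show "\<forall>i\<in>{1..degree f}. degree (coeff f i) < degree (coeff f 0)" unfolding n_def .
        show "1 \<le> degree f" using n2 n_def by linarith
      qed
      then show "coeff g 0 \<noteq> 0 \<and> lead_coeff g \<noteq> 0 \<and> degree (lead_coeff g) < degree (coeff g 0)"
        using g0nz[OF g] \<open>g \<noteq> 0\<close> by simp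
    qed
    show ?thesis
      by (rule count_lemma[OF gsne deg A c(2) Z c(2) conjunct1[OF H] q])
  next
    assume H: "reducible (coeff f n) \<and>
        (\<exists>q. irreducible q \<and> q dvd coeff f n \<and>
             (\<forall>r. irreducible r \<and> r dvd coeff f n \<longrightarrow> degree q \<le> degree r) \<and>
             int (degree (coeff f 0)) \<ge> int (degree (coeff f n)) - int (degree q)) \<and>
        (\<forall>i<n. degree (coeff f i) < degree (coeff f n))"
    then obtain q where q: "irreducible q" "q dvd coeff f n"
      "\<forall>r. irreducible r \<and> r dvd coeff f n \<longrightarrow> degree q \<le> degree r"
      "int (degree (coeff f 0)) \<ge> int (degree (coeff f n)) - int (degree q)" by blast
    have deg: "\<forall>g\<in>set gs. lead_coeff g \<noteq> 0 \<and> coeff g 0 \<noteq> 0 \<and> degree (coeff g 0) < degree (lead_coeff g)"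
    proof
      fix g assume g: "g \<in> set gs"
      obtain h where h: "h \<noteq> 0" "f = g * h" and "g \<noteq> 0" "degree g \<ge> 1" using gprops[OF g] by blast
      have "degree (coeff g 0) < degree (lead_coeff g)"
      proof (rule factor_ii[OF h(2) \<open>g \<noteq> 0\<close> h(1) \<open>degree g \<ge> 1\<close> _ g0nz[OF g]])
        have "\<forall>i<n. degree (coeff f i) < degree (coeff f n)" by (rule conjunct2[OF conjunct2[OF H]])
        then show "\<forall>i<degree f. degree (coeff f i) < degree (lead_coeff f)" unfolding n_def .
      qed
      then show "lead_coeff g \<noteq> 0 \<and> coeff g 0 \<noteq> 0 \<and> degree (coeff g 0) < degree (lead_coeff g)"
        using g0nz[OF g] \<open>g \<noteq> 0\<close> by simp
    qed
    have "length gs \<le> Om (coeff f n) \<and> length gs \<le> Om (coeff f 0)"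
      by (rule count_lemma[OF gsne deg Z c(2) A c(2) conjunct1[OF H] q])
    then show ?thesis by simp
  qed
  define gs' where "gs' = (u * hd gs) # tl gs"
  obtain g1 rest where gr: "gs = g1 # rest" using gsne by (cases gs) auto
  have "prod_list gs' = f" unfolding gs'_def gr using u(2) gr by (simp add: mult.assoc)
  moreover have "\<forall>g\<in>set gs'. irreducible g"
  proof
    fix g assume "g \<in> set gs'"
    then have "g = u * g1 \<or> g \<in> set rest" unfolding gs'_def gr by simp
    moreover have "irreducible g1" "\<forall>g\<in>set rest. irreducible g" using irr gr by auto
    ultimately show "irreducible g" using irreducible_mult_unit_left[OF u(1), of g1] by blast
  qed
  moreover have "length gs' \<le> min (num_irr_factors (coeff f 0)) (num_irr_factors (coeff f n))"
    using bound unfolding gs'_def gr num_irr_eq[OF a0] num_irr_eq[OF an] by simp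
  ultimately show ?thesis unfolding product_of_at_most_irr_def by blast
qed

end
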